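(* Let $X$ be a $CAT(\kappa)$ space and $p\in X$. Suppose the open ball $B_r(p)$ is a topological $n$-manifold for some $r<\pi_\kappa/2$. Then every geodesic $[xy]\subset B_r(p)$ can be extended to a geodesic whose endpoints lie on the sphere $S_r(p)=\{z:d(z,p)=r\}$.
   Context: $\pi_\kappa=\pi/\sqrt\kappa$ if $\kappa>0$ and $\infty$ otherwise. $CAT(\kappa)$: complete geodesic space in which for every triangle $x,y,z$ of perimeter $<2\pi_\kappa$ and every $q$ on a geodesic $[xz]$, $d(y,q)\le d(\bar y,\bar q)$ for the comparison triangle in the simply connected surface of constant curvature $\kappa$ and corresponding point $\bar q$. *)

theory Defs
  imports "HOL-Analysis.Analysis"
begin

definition pi_kappa :: "real \<Rightarrow> ereal" where
  "pi_kappa \<kappa> = (if \<kappa> > 0 then ereal (pi / sqrt \<kappa>) else \<infinity>)"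

definition geodesic_path :: "'a::metric_space \<Rightarrow> 'a \<Rightarrow> (real \<Rightarrow> 'a) \<Rightarrow> bool" where
  "geodesic_path x y g \<longleftrightarrow> g 0 = x \<and> g (dist x y) = y \<and>
     (\<forall>s\<in>{0..dist x y}. \<forall>t\<in>{0..dist x y}. dist (g s) (g t) = \<bar>s - t\<bar>)"

text \<open>Model surface M_kappa of constant curvature kappa, realised in R^3:
  kappa = 0: the plane c = 0 with Euclidean distance;
  kappa > 0: the sphere of radius 1/sqrt kappa with its intrinsic (great circle) distance;
  kappa < 0: the upper sheet of the hyperboloid a^2+b^2-c^2 = 1/kappa (hyperboloid model).\<close>
definition model_space :: "real \<Rightarrow> (real \<times> real \<times> real) set" where
  "model_space \<kappa> =
     (if \<kappa> = 0 then {(a, b, c). c = 0}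
      else if \<kappa> > 0 then {(a, b, c). a\<^sup>2 + b\<^sup>2 + c\<^sup>2 = 1 / \<kappa>}
      else {(a, b, c). a\<^sup>2 + b\<^sup>2 - c\<^sup>2 = 1 / \<kappa> \<and> c > 0})"

definition model_dist :: "real \<Rightarrow> real \<times> real \<times> real \<Rightarrow> real \<times> real \<times> real \<Rightarrow> real" where
  "model_dist \<kappa> u v =
     (case u of (a, b, c) \<Rightarrow> case v of (a', b', c') \<Rightarrow>
        if \<kappa> = 0 then sqrt ((a - a')\<^sup>2 + (b - b')\<^sup>2 + (c - c')\<^sup>2)
        else if \<kappa> > 0 then arccos (\<kappa> * (a * a' + b * b' + c * c')) / sqrt \<kappa>
        else arcosh (\<kappa> * (a * a' + b * b' - c * c')) / sqrt (- \<kappa>))"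

text \<open>CAT(kappa): complete geodesic space such that for every triangle x,y,z of perimeter
  < 2 pi_kappa, every geodesic g from x to z and every point q = g t on it, d(y,q) is at most
  the distance from ybar to the corresponding point qbar (on the segment [xbar zbar] with
  d(xbar,qbar) = d(x,q)) in a comparison triangle in M_kappa.\<close>
definition CAT :: "real \<Rightarrow> 'a::metric_space itself \<Rightarrow> bool" where
  "CAT \<kappa> _ \<longleftrightarrow>
     complete (UNIV :: 'a set) \<and>
     (\<forall>x y :: 'a. \<exists>g. geodesic_path x y g) \<and>
     (\<forall>(x::'a) y z g t. geodesic_path x z g \<and> 0 \<le> t \<and> t \<le> dist x z \<and>
        ereal (dist x y + dist y z + dist x z) < 2 * pi_kappa \<kappa> \<longrightarrow>
        (\<forall>x' y' z' q'. x' \<in> model_space \<kappa> \<and> y' \<in> model_space \<kappa> \<and> z' \<in> model_space \<kappa> \<and>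
            q' \<in> model_space \<kappa> \<and>
            model_dist \<kappa> x' y' = dist x y \<and> model_dist \<kappa> y' z' = dist y z \<and>
            model_dist \<kappa> x' z' = dist x z \<and>
            model_dist \<kappa> x' q' = t \<and> model_dist \<kappa> q' z' = dist x z - t \<longrightarrow>
            dist y (g t) \<le> model_dist \<kappa> y' q'))"

text \<open>S is a topological n-manifold (n = CARD('n)): second countable (Hausdorff is automatic in a
  metric space) and every point has an open neighbourhood in S homeomorphic to an open
  subset of R^n.\<close>
definition topological_manifold :: "'a::metric_space set \<Rightarrow> 'n::finite itself \<Rightarrow> bool" where
  "topological_manifold S _ \<longleftrightarrow>
     second_countable (top_of_set S) \<and>
     (\<forall>x\<in>S. \<exists>U (V :: (real ^ 'n) set). openin (top_of_set S) U \<and> x \<in> U \<and> open V \<and>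
        U homeomorphic V)"

end

theory Submission
  imports Defs
begin

lemma retr_lemma:
  fixes F :: "real \<times> 'b::euclidean_space \<Rightarrow> 'b" and c :: 'b
  assumes rho: "\<rho> > 0" and t: "t > 0"
    and contF: "continuous_on ({0..t} \<times> cball c \<rho>) F"
    and F0: "\<And>v. v \<in> sphere c \<rho> \<Longrightarrow> F (0, v) = v"
    and Fs: "\<And>s v. s \<in> {0..t} \<Longrightarrow> v \<in> sphere c \<rho> \<Longrightarrow> F (s, v) \<noteq> c"
    and Ft: "\<And>v. v \<in> cball c \<rho> \<Longrightarrow> F (t, v) \<noteq> c"
  shows False
proof -
  define f1 where "f1 = (\<lambda>v. F (t, c + 2 *\<^sub>R (v - c)))"
  define f2 where "f2 = (\<lambda>v. F (t * (2 - 2 * norm (v - c) / \<rho>), c + (\<rho> / norm (v - c)) *\<^sub>R (v - c)))"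
  define S1 where "S1 = cball c (\<rho>/2)"
  define S2 where "S2 = cball c \<rho> \<inter> {v. \<rho>/2 \<le> norm (v - c)}"
  define \<Phi> where "\<Phi> = (\<lambda>v. if norm (v - c) \<le> \<rho>/2 then f1 v else f2 v)"
  have S12: "S1 \<union> S2 = cball c \<rho>"
    unfolding S1_def S2_def using rho by (auto simp: dist_norm norm_minus_commute)
  have c1: "continuous_on S1 f1"
    unfolding f1_def
  proof (rule continuous_on_compose2[OF contF])
    show "continuous_on S1 (\<lambda>v. (t, c + 2 *\<^sub>R (v - c)))" by (intro continuous_intros)
    show "(\<lambda>v. (t, c + 2 *\<^sub>R (v - c))) ` S1 \<subseteq> {0..t} \<times> cball c \<rho>"
    proof
      fix w assume "w \<in> (\<lambda>v. (t, c + 2 *\<^sub>R (v - c))) ` S1"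
      then obtain v where v: "v \<in> S1" "w = (t, c + 2 *\<^sub>R (v - c))" by auto
      have "norm (v - c) \<le> \<rho>/2" using v(1) by (simp add: S1_def dist_norm norm_minus_commute)
      hence "dist c (c + 2 *\<^sub>R (v - c)) \<le> \<rho>" by (simp add: dist_norm)
      thus "w \<in> {0..t} \<times> cball c \<rho>" using v t by auto
    qed
  qed
  have c2: "continuous_on S2 f2"
    unfolding f2_def
  proof (rule continuous_on_compose2[OF contF])
    have nz: "\<And>v. v \<in> S2 \<Longrightarrow> norm (v - c) \<noteq> 0" using rho by (auto simp: S2_def)
    show "continuous_on S2 (\<lambda>v. (t * (2 - 2 * norm (v - c) / \<rho>), c + (\<rho> / norm (v - c)) *\<^sub>R (v - c)))"
      using nz rho by (intro continuous_intros) auto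
    show "(\<lambda>v. (t * (2 - 2 * norm (v - c) / \<rho>), c + (\<rho> / norm (v - c)) *\<^sub>R (v - c))) ` S2 \<subseteq> {0..t} \<times> cball c \<rho>"
    proof
      fix w assume "w \<in> (\<lambda>v. (t * (2 - 2 * norm (v - c) / \<rho>), c + (\<rho> / norm (v - c)) *\<^sub>R (v - c))) ` S2"
      then obtain v where v: "v \<in> S2" "w = (t * (2 - 2 * norm (v - c) / \<rho>), c + (\<rho> / norm (v - c)) *\<^sub>R (v - c))" by auto
      have n1: "\<rho>/2 \<le> norm (v - c)" "norm (v - c) \<le> \<rho>" using v(1) by (auto simp: S2_def dist_norm norm_minus_commute)
      have "2 * norm (v - c) / \<rho> \<le> 2" using n1 rho by (simp add: divide_simps)
      moreover have "1 \<le> 2 * norm (v - c) / \<rho>" using n1 rho by (simp add: divide_simps)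
      ultimately have "0 \<le> t * (2 - 2 * norm (v - c) / \<rho>) \<and> t * (2 - 2 * norm (v - c) / \<rho>) \<le> t"
        using t by (simp add: mult_le_cancel_left1)
      moreover have "dist c (c + (\<rho> / norm (v - c)) *\<^sub>R (v - c)) = \<rho>"
        using n1 rho by (auto simp: dist_norm)
      ultimately show "w \<in> {0..t} \<times> cball c \<rho>" using v by auto
    qed
  qed
  have cPhi: "continuous_on (cball c \<rho>) \<Phi>"
    unfolding \<Phi>_def S12[symmetric]
  proof (rule continuous_on_cases[OF _ _ c1 c2])
    show "closed S1" by (simp add: S1_def)
    show "closed S2" unfolding S2_def
      by (intro closed_Int closed_Collect_le continuous_intros) auto
    show "\<forall>v. v \<in> S1 \<and> \<not> norm (v - c) \<le> \<rho> / 2 \<or> v \<in> S2 \<and> norm (v - c) \<le> \<rho> / 2 \<longrightarrow> f1 v = f2 v"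
    proof (intro allI impI)
      fix v assume h: "v \<in> S1 \<and> \<not> norm (v - c) \<le> \<rho> / 2 \<or> v \<in> S2 \<and> norm (v - c) \<le> \<rho> / 2"
      hence n: "norm (v - c) = \<rho>/2" by (auto simp: S1_def S2_def dist_norm norm_minus_commute)
      have e1: "\<rho> / norm (v - c) = 2" and e2: "2 * norm (v - c) / \<rho> = 1" using n rho by auto
      have "f2 v = F (t * (2 - 1), c + 2 *\<^sub>R (v - c))" by (simp only: f2_def e1 e2)
      thus "f1 v = f2 v" unfolding f1_def by simp
    qed
  qed
  have Phic: "\<Phi> v \<noteq> c" if v: "v \<in> cball c \<rho>" for v
  proof (cases "norm (v - c) \<le> \<rho>/2")
    case True
    hence "dist c (c + 2 *\<^sub>R (v - c)) \<le> \<rho>" by (simp add: dist_norm)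
    thus ?thesis using True Ft by (simp add: \<Phi>_def f1_def)
  next
    case False
    have n1: "norm (v - c) \<le> \<rho>" using v by (simp add: dist_norm norm_minus_commute)
    have "2 * norm (v - c) / \<rho> \<le> 2" using n1 rho by (simp add: divide_simps)
    moreover have "1 \<le> 2 * norm (v - c) / \<rho>" using False rho by (simp add: divide_simps)
    ultimately have "t * (2 - 2 * norm (v - c) / \<rho>) \<in> {0..t}"
      using t by (simp add: mult_le_cancel_left1)
    moreover have "c + (\<rho> / norm (v - c)) *\<^sub>R (v - c) \<in> sphere c \<rho>"
      using False rho by (auto simp: dist_norm)
    ultimately show ?thesis using False Fs by (simp add: \<Phi>_def f2_def)
  qed
  have PhiS: "\<Phi> v = v" if v: "v \<in> sphere c \<rho>" for v
  proof -
    have n: "norm (v - c) = \<rho>" using v by (simp add: dist_norm norm_minus_commute)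
    thus ?thesis using rho F0[OF v] by (simp add: \<Phi>_def f2_def)
  qed
  define R where "R = (\<lambda>v. c + (\<rho> / norm (\<Phi> v - c)) *\<^sub>R (\<Phi> v - c))"
  have "retraction (cball c \<rho>) (sphere c \<rho>) R"
    unfolding retraction_def
  proof (intro conjI)
    show "sphere c \<rho> \<subseteq> cball c \<rho>" by auto
    show "continuous_on (cball c \<rho>) R" unfolding R_def
      using Phic by (intro continuous_intros cPhi) auto
    show "R \<in> cball c \<rho> \<rightarrow> sphere c \<rho>"
      using Phic rho by (auto simp: R_def dist_norm)
    show "\<forall>x\<in>sphere c \<rho>. R x = x"
      using PhiS rho by (auto simp: R_def dist_norm norm_minus_commute)
  qed
  hence "frontier (cball c \<rho>) retract_of cball c \<rho>"
    by (auto simp: retract_of_def)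
  thus False using no_retraction_cball[OF rho] by blast
qed

lemma model_path:
  assumes "ereal D < pi_kappa \<kappa>" "0 \<le> D"
  shows "\<exists>P. (\<forall>s. P s \<in> model_space \<kappa>) \<and>
     (\<forall>s\<in>{0..D}. \<forall>s'\<in>{0..D}. model_dist \<kappa> (P s) (P s') = \<bar>s - s'\<bar>)"
proof (cases "\<kappa> = 0")
  case True
  show ?thesis
    by (rule exI[of _ "\<lambda>s. (s, 0, 0)"]) (simp add: True model_space_def model_dist_def)
next
  case k0: False
  show ?thesis
  proof (cases "\<kappa> > 0")
    case True
    define q where "q = sqrt \<kappa>"
    have q: "q > 0" "q^2 = \<kappa>" using True by (auto simp: q_def)
    have Dq: "D * q < pi" using assms True by (simp add: pi_kappa_def q_def divide_simps mult.commute)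
    define P where "P = (\<lambda>s. (cos (s*q) / q, sin (s*q) / q, 0::real))"
    have "P s \<in> model_space \<kappa>" for s
    proof -
      have "(cos (s*q) / q)^2 + (sin (s*q) / q)^2 = (cos (s*q)^2 + sin (s*q)^2) / q^2"
        by (simp only: power_divide add_divide_distrib)
      also have "\<dots> = 1 / \<kappa>" by (simp only: sin_cos_squared_add2 q(2))
      finally show ?thesis using True by (simp add: model_space_def P_def)
    qed
    moreover have "model_dist \<kappa> (P s) (P s') = \<bar>s - s'\<bar>" if "s\<in>{0..D}" "s'\<in>{0..D}" for s s'
    proof -
      have "\<kappa> * (cos (s*q) / q * (cos (s'*q) / q) + sin (s*q) / q * (sin (s'*q) / q) + 0 * 0)
          = cos (s*q - s'*q)"
        using q True by (simp add: cos_diff field_simps power2_eq_square)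
      also have "\<dots> = cos (\<bar>s - s'\<bar> * q)" using q
        by (metis abs_mult_pos cos_abs_real left_diff_distrib less_imp_le)
      finally have e: "\<kappa> * (cos (s*q) / q * (cos (s'*q) / q) + sin (s*q) / q * (sin (s'*q) / q) + 0 * 0)
          = cos (\<bar>s - s'\<bar> * q)" .
      have l: "\<bar>s - s'\<bar> * q \<le> D * q" using that q by (intro mult_right_mono) auto
      have l2: "\<bar>s - s'\<bar> * q \<le> pi" using l Dq by linarith
      have "arccos (cos (\<bar>s - s'\<bar> * q)) = \<bar>s - s'\<bar> * q" using l2 q
        by (intro arccos_cos) auto
      thus ?thesis using True q e by (simp add: model_dist_def P_def q_def)
    qed
    ultimately show ?thesis by blast
  next
    case False
    hence kn: "\<kappa> < 0" using k0 by simp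
    define q where "q = sqrt (-\<kappa>)"
    have q: "q > 0" "q^2 = -\<kappa>" using kn by (auto simp: q_def)
    define P where "P = (\<lambda>s. (sinh (s*q) / q, 0::real, cosh (s*q) / q))"
    have "P s \<in> model_space \<kappa>" for s
    proof -
      have "(sinh (s*q) / q)^2 + 0^2 - (cosh (s*q) / q)^2 = (sinh (s*q)^2 - cosh (s*q)^2) / q^2"
        by (simp add: power_divide diff_divide_distrib)
      also have "\<dots> = 1 / \<kappa>" using q by (simp add: cosh_square_eq)
      finally show ?thesis using kn q by (simp add: model_space_def P_def)
    qed
    moreover have "model_dist \<kappa> (P s) (P s') = \<bar>s - s'\<bar>" for s s'
    proof -
      have "\<kappa> * (sinh (s*q) / q * (sinh (s'*q) / q) + 0 * 0 - cosh (s*q) / q * (cosh (s'*q) / q))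
          = cosh (s*q - s'*q)"
        using q kn by (simp add: cosh_diff field_simps power2_eq_square)
      also have "\<dots> = cosh (\<bar>s*q - s'*q\<bar>)" by (simp add: abs_if)
      also have "\<bar>s*q - s'*q\<bar> = \<bar>s - s'\<bar> * q" using q
        by (simp add: abs_mult left_diff_distrib[symmetric])
      finally have e: "\<kappa> * (sinh (s*q) / q * (sinh (s'*q) / q) + 0 * 0 - cosh (s*q) / q * (cosh (s'*q) / q))
          = cosh (\<bar>s - s'\<bar> * q)" .
      have "arcosh (cosh (\<bar>s - s'\<bar> * q)) = \<bar>s - s'\<bar> * q" using q
        by (intro arcosh_cosh_real) auto
      thus ?thesis using kn q e by (simp add: model_dist_def P_def q_def)
    qed
    ultimately show ?thesis by blast
  qed
qed

lemma cat_between: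
  fixes x y z :: "'a::metric_space"
  assumes cat: "CAT \<kappa> TYPE('a)" and g: "geodesic_path x z g"
    and b: "dist x y + dist y z = dist x z"
    and per: "ereal (2 * dist x z) < 2 * pi_kappa \<kappa>"
  shows "y = g (dist x y)"
proof -
  let ?D = "dist x z" and ?t = "dist x y"
  have D: "ereal ?D < pi_kappa \<kappa>"
  proof (cases "\<kappa> > 0")
    case True thus ?thesis using per by (simp add: pi_kappa_def)
  next
    case False thus ?thesis by (simp add: pi_kappa_def)
  qed
  obtain P where P: "\<And>s. P s \<in> model_space \<kappa>"
    "\<And>s s'. s\<in>{0..?D} \<Longrightarrow> s'\<in>{0..?D} \<Longrightarrow> model_dist \<kappa> (P s) (P s') = \<bar>s - s'\<bar>"
    using model_path[OF D zero_le_dist] by blast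
  have t: "0 \<le> ?t" "?t \<le> ?D" using b zero_le_dist[of y z] by (simp, linarith)
  have per': "ereal (dist x y + dist y z + dist x z) < 2 * pi_kappa \<kappa>" using b per by simp
  from cat have "\<forall>(x::'a) y z g t. geodesic_path x z g \<and> 0 \<le> t \<and> t \<le> dist x z \<and>
        ereal (dist x y + dist y z + dist x z) < 2 * pi_kappa \<kappa> \<longrightarrow>
        (\<forall>x' y' z' q'. x' \<in> model_space \<kappa> \<and> y' \<in> model_space \<kappa> \<and> z' \<in> model_space \<kappa> \<and>
            q' \<in> model_space \<kappa> \<and>
            model_dist \<kappa> x' y' = dist x y \<and> model_dist \<kappa> y' z' = dist y z \<and>
            model_dist \<kappa> x' z' = dist x z \<and>
            model_dist \<kappa> x' q' = t \<and> model_dist \<kappa> q' z' = dist x z - t \<longrightarrow>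
            dist y (g t) \<le> model_dist \<kappa> y' q')"
    unfolding CAT_def by blast
  note inst = this[rule_format, where x=x and y=y and z=z and g=g and t="?t" and x'="P 0" and y'="P ?t" and z'="P ?D" and q'="P ?t"]
  have m1: "model_dist \<kappa> (P 0) (P ?t) = ?t" using P(2)[of 0 ?t] t by simp
  have m2: "model_dist \<kappa> (P ?t) (P ?D) = dist y z" using P(2)[of ?t ?D] t b by simp
  have m3: "model_dist \<kappa> (P 0) (P ?D) = ?D" using P(2)[of 0 ?D] t by simp
  have m5: "model_dist \<kappa> (P ?t) (P ?D) = ?D - ?t" using P(2)[of ?t ?D] t by simp
  have "dist y (g ?t) \<le> model_dist \<kappa> (P ?t) (P ?t)"
    using inst g t per' P(1) m1 m2 m3 m5 by blast
  also have "\<dots> = 0" using P(2)[of ?t ?t] t by simp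
  finally show ?thesis by simp
qed

lemma per_lemma:
  assumes "ereal r < pi_kappa \<kappa> / 2" "D < 2 * r"
  shows "ereal (2 * D) < 2 * pi_kappa \<kappa>"
proof (cases "\<kappa> > 0")
  case True
  define X where "X = pi / sqrt \<kappa>"
  have "r < X / 2" using assms(1) True by (simp add: pi_kappa_def X_def)
  hence "2 * D < 2 * X" using assms(2) by linarith
  hence "2 * D < 2 * (pi / sqrt \<kappa>)" by (simp add: X_def)
  thus ?thesis using True by (simp add: pi_kappa_def)
next
  case False thus ?thesis by (simp add: pi_kappa_def)
qed

lemma geod_props:
  assumes "geodesic_path a b g" "0 \<le> s" "s \<le> 1"
  shows "dist a (g (s * dist a b)) = s * dist a b"
    "dist (g (s * dist a b)) b = (1 - s) * dist a b"
proof -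
  have iso: "\<forall>u\<in>{0..dist a b}. \<forall>v\<in>{0..dist a b}. dist (g u) (g v) = \<bar>u - v\<bar>"
    and g0: "g 0 = a" and g1: "g (dist a b) = b" using assms(1) by (auto simp: geodesic_path_def)
  have m: "s * dist a b \<in> {0..dist a b}" using assms by (auto intro: mult_left_le_one_le)
  show "dist a (g (s * dist a b)) = s * dist a b"
    using iso[rule_format, of 0 "s * dist a b"] m g0 assms by auto
  show "dist (g (s * dist a b)) b = (1 - s) * dist a b"
    using iso[rule_format, of "s * dist a b" "dist a b"] m g1 assms by (auto simp: algebra_simps)
qed

lemma local_ext:
  fixes p x0 y :: "'a::metric_space"
  assumes cat: "CAT \<kappa> TYPE('a)" and rk: "ereal r < pi_kappa \<kappa> / 2"
    and man: "topological_manifold (ball p r) TYPE('n::finite)"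
    and x0: "dist p x0 \<le> r" and y: "y \<in> ball p r" and yx: "y \<noteq> x0" and e: "\<epsilon> > 0"
  shows "\<exists>z. z \<noteq> y \<and> dist y z < \<epsilon> \<and> dist x0 y + dist y z = dist x0 z"
proof (rule ccontr)
  assume neg: "\<not> ?thesis"
  obtain U and V :: "(real ^ 'n) set" where U: "openin (top_of_set (ball p r)) U" "y \<in> U"
    and V: "open V" and UV: "U homeomorphic V"
    using man y unfolding topological_manifold_def by blast
  obtain \<phi> \<psi> where hom: "homeomorphism U V \<phi> \<psi>" using UV by (auto simp: homeomorphic_def)
  have cphi: "continuous_on U \<phi>" and cpsi: "continuous_on V \<psi>" and phiU: "\<phi> ` U = V"
    and psiV: "\<psi> ` V = U" and psiphi: "\<And>z. z \<in> U \<Longrightarrow> \<psi> (\<phi> z) = z"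
    and phipsi: "\<And>v. v \<in> V \<Longrightarrow> \<phi> (\<psi> v) = v"
    using hom by (auto simp: homeomorphism_def)
  have openU: "open U" using U(1) openin_open_trans by blast
  have Usub: "U \<subseteq> ball p r" using U(1) by (auto simp: openin_open)
  define U' where "U' = U \<inter> ball y \<epsilon>"
  have openU': "open U'" using openU by (simp add: U'_def open_Int)
  define V' where "V' = V \<inter> \<psi> -` U'"
  have openV': "open V'" unfolding V'_def by (rule continuous_open_preimage[OF cpsi V openU'])
  define c where "c = \<phi> y"
  have cV': "c \<in> V'" using U(2) e phiU psiphi by (auto simp: V'_def U'_def c_def)
  obtain e0 where e0: "e0 > 0" "cball c e0 \<subseteq> V'" using openV' cV' open_contains_cball by blast
  define \<rho> where "\<rho> = e0 / 2"
  have rho: "\<rho> > 0" "\<rho> < e0" using e0 by (auto simp: \<rho>_def)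
  have V'V: "V' \<subseteq> V" and psiV': "\<And>v. v \<in> V' \<Longrightarrow> \<psi> v \<in> U'" by (auto simp: V'_def)
  have U'U: "U' \<subseteq> U" by (auto simp: U'_def)
  have phiU': "\<And>z. z \<in> U' \<Longrightarrow> \<phi> z \<in> V'"
    using U'U phiU psiphi by (auto simp: V'_def)
  define Wo where "Wo = U' \<inter> \<phi> -` ball c e0"
  have openWo: "open Wo" unfolding Wo_def
    by (rule continuous_open_preimage[OF continuous_on_subset[OF cphi U'U] openU']) simp
  define C where "C = \<psi> ` cball c \<rho>"
  have cb: "cball c \<rho> \<subseteq> V'" using e0 rho by auto
  have compC: "compact C" unfolding C_def
    by (rule compact_continuous_image[OF continuous_on_subset[OF cpsi]]) (use cb V'V in auto)
  have CWo: "C \<subseteq> Wo"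
  proof
    fix z assume "z \<in> C"
    then obtain v where v: "v \<in> cball c \<rho>" "z = \<psi> v" by (auto simp: C_def)
    have "v \<in> V'" using v cb by auto
    thus "z \<in> Wo" using v psiV' phipsi V'V rho by (auto simp: Wo_def)
  qed
  obtain \<delta> where d: "\<delta> > 0" "\<And>z. z \<in> C \<Longrightarrow> ball z \<delta> \<subseteq> Wo"
    using Heine_Borel_lemma[OF compC, of "{Wo}"] CWo openWo by auto
  have r: "r > 0" using y by (auto intro: le_less_trans[OF zero_le_dist])
  have Dl: "dist z x0 < 2 * r" if "z \<in> U'" for z
  proof -
    have "dist p z < r" using that U'U Usub by auto
    thus ?thesis using x0 dist_triangle[of z x0 p] by (simp add: dist_commute)
  qed
  define t where "t = min (1/2) (\<delta> / (2 * r + 1))"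
  have t: "t > 0" "t \<le> 1" using d r by (auto simp: t_def)
  have tD: "t * dist z x0 < \<delta>" if "z \<in> U'" for z
  proof -
    have "t * dist z x0 \<le> (\<delta> / (2 * r + 1)) * dist z x0"
      by (intro mult_right_mono) (auto simp: t_def)
    also have "\<dots> \<le> (\<delta> / (2 * r + 1)) * (2 * r)"
      using Dl[OF that] d r by (intro mult_left_mono) auto
    also have "\<dots> < \<delta>" using d r by (simp add: divide_simps)
    finally show ?thesis .
  qed
  have geo_ex: "\<And>a b :: 'a. \<exists>g. geodesic_path a b g" using cat by (simp add: CAT_def)
  define \<gamma> where "\<gamma> = (\<lambda>z. SOME g. geodesic_path z x0 g)"
  have gam: "geodesic_path z x0 (\<gamma> z)" for z
    unfolding \<gamma>_def by (rule someI_ex[OF geo_ex])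
  define H where "H = (\<lambda>s z. \<gamma> z (s * dist z x0))"
  have H1: "dist z (H s z) = s * dist z x0" "dist (H s z) x0 = (1 - s) * dist z x0"
    if "0 \<le> s" "s \<le> 1" for s z
    using geod_props[OF gam that] by (auto simp: H_def)
  have H0: "H 0 z = z" for z using gam[of z] by (simp add: H_def geodesic_path_def)
  have Huniq: "w = H s z" if "z \<in> U'" "0 \<le> s" "s \<le> 1"
    "dist z w = s * dist z x0" "dist w x0 = (1 - s) * dist z x0" for z w s
  proof -
    have "dist z w + dist w x0 = dist z x0" using that by (simp add: algebra_simps)
    moreover have "ereal (2 * dist z x0) < 2 * pi_kappa \<kappa>" using per_lemma[OF rk Dl[OF that(1)]] .
    ultimately have "w = \<gamma> z (dist z w)" by (intro cat_between[OF cat gam])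
    thus ?thesis using that by (simp add: H_def)
  qed
  have HWo: "H s z \<in> Wo" if "z \<in> C" "0 \<le> s" "s \<le> t" for s z
  proof -
    have zU: "z \<in> U'" using that CWo by (auto simp: Wo_def)
    have "dist z (H s z) = s * dist z x0" using H1 that t by auto
    also have "\<dots> \<le> t * dist z x0" using that by (intro mult_right_mono) auto
    also have "\<dots> < \<delta>" using tD[OF zU] .
    finally show ?thesis using d(2)[OF that(1)] by auto
  qed
  define F where "F = (\<lambda>w::real \<times> (real ^ 'n). \<phi> (H (fst w) (\<psi> (snd w))))"
  define S0 where "S0 = {0..t} \<times> cball c \<rho>"
  have Fin: "F w \<in> ball c e0" "\<psi> (F w) = H (fst w) (\<psi> (snd w))" if "w \<in> S0" for w
  proof -
    have "\<psi> (snd w) \<in> C" using that by (auto simp: S0_def C_def)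
    hence "H (fst w) (\<psi> (snd w)) \<in> Wo" using that HWo by (auto simp: S0_def)
    thus "F w \<in> ball c e0" "\<psi> (F w) = H (fst w) (\<psi> (snd w))"
      using psiphi U'U by (auto simp: F_def Wo_def)
  qed
  have contF: "continuous_on S0 F"
  proof (rule continuous_from_closed_graph[of "cball c e0"])
    show "compact (cball c e0)" by simp
    show "F \<in> S0 \<rightarrow> cball c e0"
    proof
      fix w assume "w \<in> S0"
      thus "F w \<in> cball c e0" using Fin(1)[of w] by simp
    qed
    define Q where "Q = (\<lambda>w::(real \<times> (real ^ 'n)) \<times> (real ^ 'n).
       (dist (\<psi> (snd (fst w))) (\<psi> (snd w)) - fst (fst w) * dist (\<psi> (snd (fst w))) x0,
        dist (\<psi> (snd w)) x0 - (1 - fst (fst w)) * dist (\<psi> (snd (fst w))) x0))"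
    have cpsi2: "continuous_on (cball c e0) \<psi>"
      by (rule continuous_on_subset[OF cpsi]) (use e0 V'V in auto)
    have cpsi1: "continuous_on (cball c \<rho>) \<psi>"
      by (rule continuous_on_subset[OF cpsi2]) (use rho in auto)
    have c1: "continuous_on (S0 \<times> cball c e0) (\<lambda>x. \<psi> (snd (fst x)))"
      by (rule continuous_on_compose2[OF cpsi1]) (auto intro!: continuous_intros simp: S0_def)
    have c2: "continuous_on (S0 \<times> cball c e0) (\<lambda>x. \<psi> (snd x))"
      by (rule continuous_on_compose2[OF cpsi2]) (auto intro!: continuous_intros)
    have cQ: "continuous_on (S0 \<times> cball c e0) Q" unfolding Q_def
      by (intro continuous_intros c1 c2)
    have clS: "closed (S0 \<times> cball c e0)" by (simp add: S0_def closed_Times)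
    have eq: "(\<lambda>x. (x, F x)) ` S0 = {w \<in> S0 \<times> cball c e0. Q w = (0, 0)}"
    proof (intro equalityI subsetI)
      fix w assume "w \<in> (\<lambda>x. (x, F x)) ` S0"
      then obtain x where x: "x \<in> S0" "w = (x, F x)" by auto
      have s: "0 \<le> fst x" "fst x \<le> 1" using x t by (auto simp: S0_def)
      show "w \<in> {w \<in> S0 \<times> cball c e0. Q w = (0, 0)}"
        using x Fin[OF x(1)] H1[OF s] by (auto simp: Q_def)
    next
      fix w assume w: "w \<in> {w \<in> S0 \<times> cball c e0. Q w = (0, 0)}"
      obtain s v u where suv: "w = ((s, v), u)" by (metis prod.collapse)
      have s: "0 \<le> s" "s \<le> 1" "v \<in> cball c \<rho>" "u \<in> cball c e0" using w suv t by (auto simp: S0_def)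
      have zU: "\<psi> v \<in> U'" using s(3) cb psiV' by auto
      have "\<psi> u = H s (\<psi> v)"
        using w suv by (intro Huniq[OF zU s(1,2)]) (auto simp: Q_def)
      moreover have "u \<in> V" using s(4) e0 V'V by auto
      ultimately have "u = F (s, v)" using phipsi[of u] by (simp add: F_def)
      thus "w \<in> (\<lambda>x. (x, F x)) ` S0" using suv w by auto
    qed
    show "closed ((\<lambda>x. (x, F x)) ` S0)" unfolding eq
      by (rule continuous_closed_preimage_constant[OF cQ clS])
  qed
  have good: False if z: "z \<in> U'" "z \<noteq> y" "0 \<le> s" "s \<le> 1" "H s z = y" for z s
  proof -
    have "dist z y = s * dist z x0" "dist y x0 = (1 - s) * dist z x0"
      using H1[OF z(3,4), of z] z(5) by auto
    hence "dist x0 y + dist y z = dist x0 z" by (simp add: dist_commute algebra_simps)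
    moreover have "dist y z < \<epsilon>" using z(1) by (auto simp: U'_def)
    ultimately show False using neg z(2) by blast
  qed
  show False
  proof (rule retr_lemma[OF rho(1) t(1)])
    show "continuous_on ({0..t} \<times> cball c \<rho>) F" using contF by (simp add: S0_def)
    show "F (0, v) = v" if "v \<in> sphere c \<rho>" for v
    proof -
      have "v \<in> V" using that cb V'V by auto
      thus ?thesis by (simp add: F_def H0 phipsi)
    qed
    show "F (s, v) \<noteq> c" if "s \<in> {0..t}" "v \<in> sphere c \<rho>" for s v
    proof
      assume Fc: "F (s, v) = c"
      have w: "(s, v) \<in> S0" using that by (auto simp: S0_def)
      have zU: "\<psi> v \<in> U'" using that cb psiV' by auto
      have "H s (\<psi> v) = y" using Fin(2)[OF w] Fc U(2) psiphi by (simp add: c_def)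
      moreover have "\<psi> v \<noteq> y"
      proof
        assume yv: "\<psi> v = y"
        have "v \<in> V" using that cb V'V by auto
        hence "\<phi> (\<psi> v) = v" by (rule phipsi)
        hence "v = c" using yv by (simp add: c_def)
        thus False using that rho by auto
      qed
      moreover have "0 \<le> s" "s \<le> 1" using that t by auto
      ultimately show False using good[OF zU] by blast
    qed
    show "F (t, v) \<noteq> c" if "v \<in> cball c \<rho>" for v
    proof
      assume Fc: "F (t, v) = c"
      have w: "(t, v) \<in> S0" using that t by (auto simp: S0_def)
      have zU: "\<psi> v \<in> U'" using that cb psiV' by auto
      have Hy: "H t (\<psi> v) = y" using Fin(2)[OF w] Fc U(2) psiphi by (simp add: c_def)
      moreover have "\<psi> v \<noteq> y"
      proof
        assume yy: "\<psi> v = y"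
        have "dist y (H t y) = t * dist y x0" using H1 t by auto
        hence "t * dist y x0 = 0" using Hy yy by simp
        thus False using t yx by simp
      qed
      moreover have "0 \<le> t" "t \<le> 1" using t by auto
      ultimately show False using good[OF zU] by blast
    qed
  qed
qed

lemma ext_fwd:
  fixes p :: "'a::metric_space" and h :: "real \<Rightarrow> 'a"
  assumes cat: "CAT \<kappa> TYPE('a)" and rk: "ereal r < pi_kappa \<kappa> / 2"
    and man: "topological_manifold (ball p r) TYPE('n::finite)"
    and iso: "\<forall>s\<in>{0..L}. \<forall>u\<in>{0..L}. dist (h s) (h u) = \<bar>s - u\<bar>"
    and L: "L > 0" and h0: "dist p (h 0) \<le> r" and hL: "h L \<in> ball p r"
  shows "\<exists>b g'. L \<le> b \<and> (\<forall>s\<in>{0..b}. \<forall>u\<in>{0..b}. dist (g' s) (g' u) = \<bar>s - u\<bar>) \<and>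
           (\<forall>s\<in>{0..L}. g' s = h s) \<and> dist p (g' b) = r"
proof (rule ccontr)
  assume neg: "\<not> ?thesis"
  define x0 where "x0 = h 0"
  define good where "good = (\<lambda>b (f::real \<Rightarrow> 'a). L \<le> b \<and>
     (\<forall>s\<in>{0..b}. \<forall>u\<in>{0..b}. dist (f s) (f u) = \<bar>s - u\<bar>) \<and>
     (\<forall>s\<in>{0..L}. f s = h s) \<and> (\<forall>s\<in>{L..b}. f s \<in> ball p r))"
  define gr where "gr = (\<lambda>b (f::real \<Rightarrow> 'a). (\<lambda>s. (s, f s)) ` {0..b})"
  define A where "A = {X. \<exists>b f. good b f \<and> X = gr b f}"
  have geo_ex: "\<And>a b :: 'a. \<exists>g. geodesic_path a b g" using cat by (simp add: CAT_def)
  have x0p: "dist p x0 \<le> r" using h0 by (simp add: x0_def)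
  have f0: "f 0 = x0" if "good b f" for b f
    using that L by (auto simp: good_def x0_def)
  have fdist: "dist (f s) (f u) = \<bar>s - u\<bar>" if "good b f" "s \<in> {0..b}" "u \<in> {0..b}" for b f s u
    using that by (auto simp: good_def)
  have fball: "f s \<in> ball p r" if "good b f" "s \<in> {L..b}" for b f s
    using that by (auto simp: good_def)
  have bnd: "b < 2 * r" if g: "good b f" for b f
  proof -
    have bL: "L \<le> b" using g by (simp add: good_def)
    have "dist x0 (f b) = b" using fdist[OF g, of 0 b] f0[OF g] bL L by auto
    moreover have "dist p (f b) < r" using fball[OF g, of b] bL by auto
    ultimately show ?thesis using x0p dist_triangle[of x0 "f b" p] by (simp add: dist_commute)
  qed
  have step: "\<exists>b' f'. good b' f' \<and> b < b' \<and> gr b f \<subseteq> gr b' f'" if g: "good b f" for b f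
  proof -
    have bL: "L \<le> b" using g by (simp add: good_def)
    define y where "y = f b"
    have yb: "y \<in> ball p r" using fball[OF g, of b] bL by (simp add: y_def)
    have x0y: "dist x0 y = b" using fdist[OF g, of 0 b] f0[OF g] bL L by (auto simp: y_def)
    have yx: "y \<noteq> x0" using x0y bL L by auto
    define \<epsilon> where "\<epsilon> = r - dist p y"
    have e: "\<epsilon> > 0" using yb by (simp add: \<epsilon>_def)
    obtain z where z: "z \<noteq> y" "dist y z < \<epsilon>" "dist x0 y + dist y z = dist x0 z"
      using local_ext[OF cat rk man x0p yb yx e] by blast
    obtain \<gamma> where gam: "geodesic_path x0 z \<gamma>" using geo_ex by blast
    define D where "D = dist x0 z"
    have yz: "dist y z > 0" using z(1) by simp
    have Db: "D = b + dist y z" using z(3) x0y by (simp add: D_def)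
    have Dgt: "b < D" using Db yz by linarith
    have dz: "dist p z < r" using z(2) dist_triangle[of p z y] by (simp add: \<epsilon>_def)
    have Dl: "D < 2 * r" using dz x0p dist_triangle[of x0 z p] by (simp add: D_def dist_commute)
    have per: "ereal (2 * dist x0 z) < 2 * pi_kappa \<kappa>" using per_lemma[OF rk Dl] by (simp add: D_def)
    have giso: "\<forall>s\<in>{0..D}. \<forall>u\<in>{0..D}. dist (\<gamma> s) (\<gamma> u) = \<bar>s - u\<bar>" "\<gamma> 0 = x0" "\<gamma> D = z"
      using gam by (auto simp: geodesic_path_def D_def)
    have fg: "f s = \<gamma> s" if s: "s \<in> {0..b}" for s
    proof -
      have a1: "dist x0 (f s) = s" using fdist[OF g, of 0 s] f0[OF g] s bL L by auto
      have a2: "dist (f s) y = b - s" using fdist[OF g, of s b] s bL by (auto simp: y_def)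
      have "dist (f s) z \<le> D - s" using dist_triangle[of "f s" z y] a2 Db by simp
      moreover have "D \<le> s + dist (f s) z" using dist_triangle[of x0 z "f s"] a1 by (simp add: D_def)
      ultimately have "dist x0 (f s) + dist (f s) z = dist x0 z" using a1 by (simp add: D_def)
      from cat_between[OF cat gam this per] show ?thesis using a1 by simp
    qed
    define f' where "f' = (\<lambda>s. if s \<le> b then f s else \<gamma> s)"
    have f'g: "f' s = \<gamma> s" if "s \<in> {0..D}" for s
      using that fg by (auto simp: f'_def)
    have good': "good D f'"
      unfolding good_def
    proof (intro conjI ballI)
      show "L \<le> D" using bL Db zero_le_dist[of y z] by linarith
      show "dist (f' s) (f' u) = \<bar>s - u\<bar>" if "s \<in> {0..D}" "u \<in> {0..D}" for s u
        using that giso(1) f'g by auto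
      show "f' s = h s" if "s \<in> {0..L}" for s
        using that g bL by (auto simp: f'_def good_def)
      show "f' s \<in> ball p r" if s: "s \<in> {L..D}" for s
      proof (cases "s \<le> b")
        case True thus ?thesis using fball[OF g, of s] s by (simp add: f'_def)
      next
        case False
        have yg: "y = \<gamma> b" using fg[of b] bL L by (simp add: y_def)
        have "dist (\<gamma> b) (\<gamma> s) = s - b" using giso(1) False s bL L Db yz by auto
        hence "dist y (\<gamma> s) \<le> dist y z" using yg s Db by simp
        hence "dist p (\<gamma> s) < r" using dist_triangle[of p "\<gamma> s" y] z(2) by (simp add: \<epsilon>_def)
        thus ?thesis using False by (simp add: f'_def)
      qed
    qed
    have "gr b f \<subseteq> gr D f'"
    proof
      fix q assume "q \<in> gr b f"
      then obtain s where s: "s \<in> {0..b}" "q = (s, f s)" by (auto simp: gr_def)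
      hence "s \<in> {0..D}" "f' s = f s" using Dgt by (auto simp: f'_def)
      thus "q \<in> gr D f'" using s by (auto simp: gr_def)
    qed
    thus ?thesis using good' Dgt by auto
  qed
  have chain_ub: "\<forall>C\<in>chains A. \<exists>U\<in>A. \<forall>X\<in>C. X \<subseteq> U"
  proof
    fix C assume C: "C \<in> chains A"
    have CA: "C \<subseteq> A" using C by (rule chainsD2)
    have comp: "\<And>X Y. X \<in> C \<Longrightarrow> Y \<in> C \<Longrightarrow> X \<subseteq> Y \<or> Y \<subseteq> X" using C by (rule chainsD)
    show "\<exists>U\<in>A. \<forall>X\<in>C. X \<subseteq> U"
    proof (cases "C = {}")
      case True
      have "good L h" using iso hL by (auto simp: good_def)
      hence "gr L h \<in> A" by (auto simp: A_def)
      thus ?thesis using True by blast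
    next
      case Cne: False
      define bf where "bf = (\<lambda>X. SOME q. good (fst q) (snd q) \<and> X = gr (fst q) (snd q))"
      have bfX: "good (fst (bf X)) (snd (bf X)) \<and> X = gr (fst (bf X)) (snd (bf X))" if "X \<in> C" for X
      proof -
        have "\<exists>q. good (fst q) (snd q) \<and> X = gr (fst q) (snd q)" using that CA by (auto simp: A_def)
        thus ?thesis unfolding bf_def by (rule someI_ex)
      qed
      define bb where "bb = (\<lambda>X. fst (bf X))"
      define ff where "ff = (\<lambda>X. snd (bf X))"
      have goodX: "good (bb X) (ff X)" and grX: "X = gr (bb X) (ff X)" if "X \<in> C" for X
        using bfX[OF that] by (auto simp: bb_def ff_def)
      define G where "G = \<Union>C"
      have common: "\<exists>X\<in>C. q1 \<in> X \<and> q2 \<in> X" if qq: "q1 \<in> G" "q2 \<in> G" for q1 q2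
      proof -
        obtain X1 X2 where "X1 \<in> C" "X2 \<in> C" "q1 \<in> X1" "q2 \<in> X2" using qq by (auto simp: G_def)
        thus ?thesis using comp[of X1 X2] by blast
      qed
      have memX: "0 \<le> s \<and> s \<le> bb X \<and> w = ff X s" if qq: "X \<in> C" "(s, w) \<in> X" for X s w
      proof -
        have "(s, w) \<in> gr (bb X) (ff X)" using qq grX[OF qq(1)] by metis
        thus ?thesis by (auto simp: gr_def)
      qed
      have Gdist: "dist w w' = \<bar>s - s'\<bar>" if qq: "(s, w) \<in> G" "(s', w') \<in> G" for s w s' w'
      proof -
        obtain X where X: "X \<in> C" "(s, w) \<in> X" "(s', w') \<in> X" using common[OF qq] by blast
        show ?thesis using memX[OF X(1,2)] memX[OF X(1,3)] fdist[OF goodX[OF X(1)]] by auto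
      qed
      have Gball: "w \<in> ball p r" if qq: "(s, w) \<in> G" "L \<le> s" for s w
      proof -
        obtain X where X: "X \<in> C" "(s, w) \<in> X" using qq by (auto simp: G_def)
        show ?thesis using memX[OF X] fball[OF goodX[OF X(1)]] qq by auto
      qed
      have Gh: "w = h s" if qq: "(s, w) \<in> G" "s \<le> L" for s w
      proof -
        obtain X where X: "X \<in> C" "(s, w) \<in> X" using qq by (auto simp: G_def)
        show ?thesis using memX[OF X] goodX[OF X(1)] qq by (auto simp: good_def)
      qed
      have Gin: "(s, ff X s) \<in> G" if qq: "X \<in> C" "s \<in> {0..bb X}" for X s
      proof -
        have "(s, ff X s) \<in> gr (bb X) (ff X)" using qq by (auto simp: gr_def)
        hence "(s, ff X s) \<in> X" using grX[OF qq(1)] by metis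
        thus ?thesis using qq by (auto simp: G_def)
      qed
      define T where "T = Sup (bb ` C)"
      have bdd: "bdd_above (bb ` C)"
        using bnd goodX by (auto intro!: bdd_aboveI[of _ "2 * r"] less_imp_le)
      have bT: "bb X \<le> T" if "X \<in> C" for X
        unfolding T_def using bdd that by (intro cSup_upper) auto
      show ?thesis
      proof (cases "\<exists>X\<in>C. bb X = T")
        case True
        then obtain X where X: "X \<in> C" "bb X = T" by blast
        have "Y \<subseteq> X" if Y: "Y \<in> C" for Y
        proof
          fix q assume q: "q \<in> Y"
          obtain s w where sw: "q = (s, w)" by (metis prod.collapse)
          have s: "0 \<le> s" "s \<le> bb Y" "w = ff Y s" using memX[OF Y] q sw by auto
          have "(s, ff X s) \<in> G" using Gin[OF X(1)] s bT[OF Y] X(2) by auto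
          moreover have "(s, w) \<in> G" using q sw Y by (auto simp: G_def)
          ultimately have "dist w (ff X s) = 0" using Gdist by (metis diff_self abs_zero)
          hence "w = ff X s" by simp
          thus "q \<in> X" using grX[OF X(1)] s bT[OF Y] X(2) sw by (auto simp: gr_def)
        qed
        thus ?thesis using X CA by blast
      next
        case False
        hence bltT: "bb X < T" if qq: "X \<in> C" for X
        proof -
          have "bb X \<noteq> T" using qq False by blast
          thus ?thesis using bT[OF qq] by simp
        qed
        obtain X0 where X0: "X0 \<in> C" using Cne by blast
        have "L \<le> bb X0" using goodX[OF X0] unfolding good_def by blast
        hence LT: "L < T" using bltT[OF X0] by linarith
        have exG: "\<exists>w. (s, w) \<in> G" if "0 \<le> s" "s < T" for s
        proof -
          note qq = that
          have "s < Sup (bb ` C)" using qq by (simp add: T_def)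
          moreover have "bb ` C \<noteq> {}" using Cne by simp
          ultimately obtain b where "b \<in> bb ` C" "s < b" by (rule less_cSupE)
          then obtain X where "X \<in> C" "s < bb X" by auto
          thus ?thesis using Gin[of X s] qq by auto
        qed
        define F where "F = (\<lambda>s. THE w. (s, w) \<in> G)"
        have FG: "(s, F s) \<in> G" if "0 \<le> s" "s < T" for s
        proof -
          note qq = that
          obtain w where w: "(s, w) \<in> G" using exG[OF qq] by blast
          have "\<And>w'. (s, w') \<in> G \<Longrightarrow> w' = w"
          proof -
            fix w' assume "(s, w') \<in> G"
            hence "dist w' w = 0" using Gdist[OF _ w] by (metis diff_self abs_zero)
            thus "w' = w" by simp
          qed
          hence "F s = w" unfolding F_def using w by (intro the_equality) blast+
          thus ?thesis using w by simp
        qed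
        have Fd: "dist (F s) (F u) = \<bar>s - u\<bar>" if "0 \<le> s" "s < T" "0 \<le> u" "u < T" for s u
          using Gdist[OF FG[OF that(1,2)] FG[OF that(3,4)]] .
        define \<sigma> where "\<sigma> = (\<lambda>n. T - (T - L) * inverse (real (Suc n)))"
        have sig: "L \<le> \<sigma> n" "\<sigma> n < T" for n
        proof -
          have "inverse (real (Suc n)) \<le> 1" by (simp add: inverse_le_1_iff)
          have "0 < inverse (real (Suc n))" by simp
          hence "(T - L) * inverse (real (Suc n)) \<le> T - L" "0 < (T - L) * inverse (real (Suc n))"
            using LT \<open>inverse (real (Suc n)) \<le> 1\<close> by (auto intro: mult_left_le)
          thus "L \<le> \<sigma> n" "\<sigma> n < T" by (auto simp: \<sigma>_def)
        qed
        have sigT: "\<sigma> \<longlonglongrightarrow> T"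
        proof -
          have "(\<lambda>n. T - (T - L) * inverse (real (Suc n))) \<longlonglongrightarrow> T - (T - L) * 0"
            by (intro tendsto_intros LIMSEQ_inverse_real_of_nat)
          thus ?thesis by (simp add: \<sigma>_def)
        qed
        have sig0: "0 \<le> \<sigma> n" for n using sig[of n] L by simp
        have "Cauchy (\<lambda>n. F (\<sigma> n))"
        proof -
          have cs: "Cauchy \<sigma>" using sigT by (rule LIMSEQ_imp_Cauchy)
          show ?thesis unfolding Cauchy_def
          proof (intro allI impI)
            fix e :: real assume "e > 0"
            then obtain M where M: "\<forall>m\<ge>M. \<forall>n\<ge>M. dist (\<sigma> m) (\<sigma> n) < e" using cs unfolding Cauchy_def by blast
            have "dist (F (\<sigma> m)) (F (\<sigma> n)) = dist (\<sigma> m) (\<sigma> n)" for m n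
              using Fd[OF sig0 sig(2) sig0 sig(2)] by (simp add: dist_real_def)
            hence "\<forall>m\<ge>M. \<forall>n\<ge>M. dist (F (\<sigma> m)) (F (\<sigma> n)) < e"
              using M by simp
            thus "\<exists>M. \<forall>m\<ge>M. \<forall>n\<ge>M. dist (F (\<sigma> m)) (F (\<sigma> n)) < e" by blast
          qed
        qed
        moreover have "complete (UNIV :: 'a set)" using cat by (simp add: CAT_def)
        ultimately obtain ws where ws: "(\<lambda>n. F (\<sigma> n)) \<longlonglongrightarrow> ws"
          unfolding complete_def by blast
        have Fws: "dist (F s) ws = T - s" if "0 \<le> s" "s < T" for s
        proof -
          have "(\<lambda>n. dist (F s) (F (\<sigma> n))) \<longlonglongrightarrow> dist (F s) ws"
            by (intro tendsto_intros ws)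
          moreover have "(\<lambda>n. dist (F s) (F (\<sigma> n))) = (\<lambda>n. \<bar>s - \<sigma> n\<bar>)"
            using Fd[OF that sig0 sig(2)] by (intro ext) simp
          moreover have "(\<lambda>n. \<bar>s - \<sigma> n\<bar>) \<longlonglongrightarrow> \<bar>s - T\<bar>" by (intro tendsto_intros sigT)
          ultimately have "dist (F s) ws = \<bar>s - T\<bar>" using LIMSEQ_unique by metis
          thus ?thesis using that by simp
        qed
        have wsr: "dist p ws \<le> r"
        proof (rule LIMSEQ_le_const2)
          show "(\<lambda>n. dist p (F (\<sigma> n))) \<longlonglongrightarrow> dist p ws" by (intro tendsto_intros ws)
          have "dist p (F (\<sigma> n)) \<le> r" for n
            using Gball[OF FG[OF sig0 sig(2)] sig(1)] by (simp add: less_imp_le)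
          thus "\<exists>N. \<forall>n\<ge>N. dist p (F (\<sigma> n)) \<le> r" by blast
        qed
        define fs where "fs = (\<lambda>s. if s < T then F s else ws)"
        have fsiso: "\<forall>s\<in>{0..T}. \<forall>u\<in>{0..T}. dist (fs s) (fs u) = \<bar>s - u\<bar>"
        proof (intro ballI)
          fix s u assume s: "s \<in> {0..T}" and u: "u \<in> {0..T}"
          show "dist (fs s) (fs u) = \<bar>s - u\<bar>"
          proof (cases "s < T"; cases "u < T")
            assume "s < T" "u < T" thus ?thesis using Fd s u by (simp add: fs_def)
          next
            assume "s < T" "\<not> u < T" thus ?thesis using Fws s u by (simp add: fs_def)
          next
            assume "\<not> s < T" "u < T" thus ?thesis using Fws s u by (simp add: fs_def dist_commute)
          next
            assume "\<not> s < T" "\<not> u < T" thus ?thesis using s u by (simp add: fs_def)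
          qed
        qed
        have fsh: "\<forall>s\<in>{0..L}. fs s = h s"
          using LT Gh FG by (auto simp: fs_def)
        have wsn: "dist p ws \<noteq> r"
        proof
          assume "dist p ws = r"
          hence "dist p (fs T) = r" by (simp add: fs_def)
          hence "\<exists>b g'. L \<le> b \<and> (\<forall>s\<in>{0..b}. \<forall>u\<in>{0..b}. dist (g' s) (g' u) = \<bar>s - u\<bar>) \<and>
           (\<forall>s\<in>{0..L}. g' s = h s) \<and> dist p (g' b) = r"
            using fsiso fsh LT by (intro exI[of _ T] exI[of _ fs]) simp
          thus False using neg by blast
        qed
        have goodT: "good T fs"
          unfolding good_def
        proof (intro conjI)
          show "L \<le> T" using LT by simp
          show "\<forall>s\<in>{L..T}. fs s \<in> ball p r"
          proof
            fix s assume s: "s \<in> {L..T}"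
            show "fs s \<in> ball p r"
            proof (cases "s < T")
              case True
              have "0 \<le> s" using s L by simp
              thus ?thesis using Gball[OF FG[OF _ True]] s True by (simp add: fs_def)
            next
              case False thus ?thesis using wsr wsn by (simp add: fs_def)
            qed
          qed
        qed (use fsiso fsh in auto)
        have "gr T fs \<in> A" using goodT by (auto simp: A_def)
        moreover have "X \<subseteq> gr T fs" if X: "X \<in> C" for X
        proof
          fix q assume q: "q \<in> X"
          obtain s w where sw: "q = (s, w)" by (metis prod.collapse)
          have s: "0 \<le> s" "s \<le> bb X" using memX[OF X] q sw by auto
          have sT: "s < T" using s bltT[OF X] by simp
          have "(s, w) \<in> G" using q sw X by (auto simp: G_def)
          hence "dist w (F s) = 0" using FG[OF s(1) sT] Gdist by (metis diff_self abs_zero)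
          hence "w = F s" by simp
          thus "q \<in> gr T fs" using sw s sT by (auto simp: gr_def fs_def)
        qed
        ultimately show ?thesis by blast
      qed
    qed
  qed
  obtain M where M: "M \<in> A" "\<And>X. X \<in> A \<Longrightarrow> M \<subseteq> X \<Longrightarrow> X = M"
    using Zorn_Lemma2[OF chain_ub] by blast
  obtain b f where bf: "good b f" "M = gr b f" using M(1) by (auto simp: A_def)
  obtain b' f' where bf': "good b' f'" "b < b'" "gr b f \<subseteq> gr b' f'" using step[OF bf(1)] by blast
  have "gr b' f' \<in> A" using bf' by (auto simp: A_def)
  hence eq: "gr b' f' = gr b f" using M(2) bf bf' by auto
  have "(b', f' b') \<in> gr b' f'" using bf' bf(1) L by (auto simp: gr_def good_def)
  hence "(b', f' b') \<in> gr b f" using eq by simp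
  thus False using bf'(2) by (auto simp: gr_def)
qed

lemma two_sided:
  fixes p :: "'a::metric_space" and g :: "real \<Rightarrow> 'a"
  assumes cat: "CAT \<kappa> TYPE('a)" and rk: "ereal r < pi_kappa \<kappa> / 2"
    and man: "topological_manifold (ball p r) TYPE('n::finite)"
    and iso: "\<forall>s\<in>{0..d}. \<forall>u\<in>{0..d}. dist (g s) (g u) = \<bar>s - u\<bar>"
    and d: "d > 0" and g0: "g 0 \<in> ball p r" and gd: "g d \<in> ball p r"
  shows "\<exists>a b g'. a \<le> 0 \<and> d \<le> b \<and>
           (\<forall>s\<in>{a..b}. \<forall>t\<in>{a..b}. dist (g' s) (g' t) = \<bar>s - t\<bar>) \<and>
           (\<forall>t\<in>{0..d}. g' t = g t) \<and>
           dist p (g' a) = r \<and> dist p (g' b) = r"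
proof -
  have "dist p (g 0) \<le> r" using g0 by simp
  from ext_fwd[OF cat rk man iso d this gd]
  obtain b g1 where b: "d \<le> b" and iso1: "\<forall>s\<in>{0..b}. \<forall>u\<in>{0..b}. dist (g1 s) (g1 u) = \<bar>s - u\<bar>"
    and g1g: "\<forall>s\<in>{0..d}. g1 s = g s" and g1b: "dist p (g1 b) = r" by blast
  define h2 where "h2 = (\<lambda>s. g1 (b - s))"
  have iso2: "\<forall>s\<in>{0..b}. \<forall>u\<in>{0..b}. dist (h2 s) (h2 u) = \<bar>s - u\<bar>"
  proof (intro ballI)
    fix s u assume "s \<in> {0..b}" "u \<in> {0..b}"
    hence "b - s \<in> {0..b}" "b - u \<in> {0..b}" by auto
    thus "dist (h2 s) (h2 u) = \<bar>s - u\<bar>" using iso1 by (simp add: h2_def abs_minus_commute)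
  qed
  have b0: "b > 0" using b d by simp
  have h20: "dist p (h2 0) \<le> r" using g1b by (simp add: h2_def)
  have h2b: "h2 b \<in> ball p r" using g1g g0 d by (simp add: h2_def)
  from ext_fwd[OF cat rk man iso2 b0 h20 h2b]
  obtain b2 g2 where b2: "b \<le> b2" and iso3: "\<forall>s\<in>{0..b2}. \<forall>u\<in>{0..b2}. dist (g2 s) (g2 u) = \<bar>s - u\<bar>"
    and g2h: "\<forall>s\<in>{0..b}. g2 s = h2 s" and g2b: "dist p (g2 b2) = r" by blast
  define g' where "g' = (\<lambda>s. g2 (b - s))"
  show ?thesis
  proof (intro exI conjI)
    show "b - b2 \<le> 0" using b2 by simp
    show "d \<le> b" by (rule b)
    show "\<forall>s\<in>{b - b2..b}. \<forall>t\<in>{b - b2..b}. dist (g' s) (g' t) = \<bar>s - t\<bar>"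
    proof (intro ballI)
      fix s u assume "s \<in> {b - b2..b}" "u \<in> {b - b2..b}"
      hence "b - s \<in> {0..b2}" "b - u \<in> {0..b2}" by auto
      thus "dist (g' s) (g' u) = \<bar>s - u\<bar>" using iso3 by (simp add: g'_def abs_minus_commute)
    qed
    show "\<forall>t\<in>{0..d}. g' t = g t"
    proof
      fix t assume t: "t \<in> {0..d}"
      hence "b - t \<in> {0..b}" using b by auto
      hence "g' t = g1 t" using g2h by (simp add: g'_def h2_def)
      thus "g' t = g t" using g1g t by simp
    qed
    show "dist p (g' (b - b2)) = r" using g2b by (simp add: g'_def)
    show "dist p (g' b) = r" using g2h g1b b0 by (simp add: g'_def h2_def)
  qed
qed

theorem lemma3p1:
  fixes p x y :: "'a::metric_space" and \<kappa> r :: real and g :: "real \<Rightarrow> 'a"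
  assumes "CAT \<kappa> TYPE('a)"
    and "ereal r < pi_kappa \<kappa> / 2"
    and "topological_manifold (ball p r) TYPE('n::finite)"
    and "geodesic_path x y g"
    and "g ` {0..dist x y} \<subseteq> ball p r"
  shows "\<exists>a b g'. a \<le> 0 \<and> dist x y \<le> b \<and>
           (\<forall>s\<in>{a..b}. \<forall>t\<in>{a..b}. dist (g' s) (g' t) = \<bar>s - t\<bar>) \<and>
           (\<forall>t\<in>{0..dist x y}. g' t = g t) \<and>
           dist p (g' a) = r \<and> dist p (g' b) = r"
proof -
  note cat = assms(1) and rk = assms(2) and man = assms(3)
  have iso: "\<forall>s\<in>{0..dist x y}. \<forall>u\<in>{0..dist x y}. dist (g s) (g u) = \<bar>s - u\<bar>"
    and g0: "g 0 = x" and gd: "g (dist x y) = y" using assms(4) by (auto simp: geodesic_path_def)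
  have xb: "g 0 \<in> ball p r" and yb: "g (dist x y) \<in> ball p r"
    using assms(5) by (auto simp: image_subset_iff)
  show ?thesis
  proof (cases "x = y")
    case False
    hence dp: "dist x y > 0" by simp
    show ?thesis by (rule two_sided[OF cat rk man iso dp xb yb])
  next
    case True
    have xB: "x \<in> ball p r" using xb g0 by simp
    obtain U and V :: "(real ^ 'n) set" where U: "openin (top_of_set (ball p r)) U" "x \<in> U"
      and V: "open V" and UV: "U homeomorphic V"
      using man xB unfolding topological_manifold_def by blast
    obtain \<phi> \<psi> where hom: "homeomorphism U V \<phi> \<psi>" using UV by (auto simp: homeomorphic_def)
    have Usub: "U \<subseteq> ball p r" using U(1) by (auto simp: openin_open)
    have "U \<noteq> {x}"
    proof
      assume Ux: "U = {x}"
      have "\<phi> ` U = V" using hom by (simp add: homeomorphism_def)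
      hence "V = {\<phi> x}" using Ux by simp
      hence "open {\<phi> x}" using V by simp
      thus False by (rule not_open_singleton[THEN notE])
    qed
    then obtain w where w: "w \<in> ball p r" "w \<noteq> x" using U(2) Usub by blast
    have geo_ex: "\<And>a b :: 'a. \<exists>g. geodesic_path a b g" using cat by (simp add: CAT_def)
    obtain \<gamma> where gam: "geodesic_path w x \<gamma>" using geo_ex by blast
    have isog: "\<forall>s\<in>{0..dist w x}. \<forall>u\<in>{0..dist w x}. dist (\<gamma> s) (\<gamma> u) = \<bar>s - u\<bar>"
      and gw: "\<gamma> 0 = w" and gx: "\<gamma> (dist w x) = x" using gam by (auto simp: geodesic_path_def)
    have D: "dist w x > 0" using w by simp
    have g0': "\<gamma> 0 \<in> ball p r" using gw w(1) by simp
    have gx': "\<gamma> (dist w x) \<in> ball p r" using gx xB by simp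
    obtain a b G where a: "a \<le> 0" and b: "dist w x \<le> b"
      and isoG: "\<forall>s\<in>{a..b}. \<forall>t\<in>{a..b}. dist (G s) (G t) = \<bar>s - t\<bar>"
      and Gg: "\<forall>t\<in>{0..dist w x}. G t = \<gamma> t" and Ga: "dist p (G a) = r" and Gb: "dist p (G b) = r"
      using two_sided[OF cat rk man isog D g0' gx'] by blast
    define D where "D = dist w x"
    show ?thesis
    proof (intro exI conjI)
      show "a - D \<le> 0" using a D unfolding D_def by linarith
      show "dist x y \<le> b - D" using True b by (simp add: D_def)
      show "\<forall>s\<in>{a - D..b - D}. \<forall>t\<in>{a - D..b - D}. dist (G (s + D)) (G (t + D)) = \<bar>s - t\<bar>"
      proof (intro ballI)
        fix s t assume "s \<in> {a - D..b - D}" "t \<in> {a - D..b - D}"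
        hence "s + D \<in> {a..b}" "t + D \<in> {a..b}" by auto
        thus "dist (G (s + D)) (G (t + D)) = \<bar>s - t\<bar>" using isoG by simp
      qed
      show "\<forall>t\<in>{0..dist x y}. G (t + D) = g t"
        using True Gg gx g0 D by (simp add: D_def)
      show "dist p (G (a - D + D)) = r" using Ga by simp
      show "dist p (G (b - D + D)) = r" using Gb by simp
    qed
  qed
qed

end
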